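(* Let $K$ be the field of fractions of a complete discrete valuation ring $\mathcal{O}$. In the coefficient-choosing game of degree $d = 2$ over $K$, whichever player makes the last move has a winning strategy.
   Context: The coefficient-choosing game of degree $d$ over $K$: Nora and Wanda alternately choose coefficients of $f(x) = a_d x^d + \cdots + a_0$; on each move the current player picks a not-yet-chosen coefficient and assigns it a value in $K$, subject to $a_d \neq 0$, $a_0 \neq 0$. After all $d+1$ coefficients are chosen, Wanda wins if $f$ has a root in $K$, and Nora wins otherwise. Who moves first is fixed in advance. *)

theory Defs
  imports Main "HOL-Computational_Algebra.Polynomial"
begin

text \<open>A discrete valuation on a field K: a map v from the nonzero elements of K onto the
integers (the value at 0 is irrelevant), multiplicative-to-additive and satisfying the
ultrametric inequality. Surjectivity onto the integers is normalised by the existence of a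
uniformiser (an element of value 1).\<close>

definition discrete_valuation :: "('a::field \<Rightarrow> int) \<Rightarrow> bool" where
  "discrete_valuation v \<longleftrightarrow>
     (\<forall>x y. x \<noteq> 0 \<longrightarrow> y \<noteq> 0 \<longrightarrow> v (x * y) = v x + v y) \<and>
     (\<forall>x y. x \<noteq> 0 \<longrightarrow> y \<noteq> 0 \<longrightarrow> x + y \<noteq> 0 \<longrightarrow> min (v x) (v y) \<le> v (x + y)) \<and>
     (\<exists>p. p \<noteq> 0 \<and> v p = 1)"

text \<open>Cauchy sequences and convergence for the v-adic metric (x is close to y iff
x = y or v(x - y) is large).\<close>

definition val_cauchy :: "('a::field \<Rightarrow> int) \<Rightarrow> (nat \<Rightarrow> 'a) \<Rightarrow> bool" where
  "val_cauchy v X \<longleftrightarrow>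
     (\<forall>N::int. \<exists>M. \<forall>m\<ge>M. \<forall>n\<ge>M. X m = X n \<or> N \<le> v (X m - X n))"

definition val_converges :: "('a::field \<Rightarrow> int) \<Rightarrow> (nat \<Rightarrow> 'a) \<Rightarrow> 'a \<Rightarrow> bool" where
  "val_converges v X L \<longleftrightarrow>
     (\<forall>N::int. \<exists>M. \<forall>n\<ge>M. X n = L \<or> N \<le> v (X n - L))"

text \<open>K (the ambient field type) is the fraction field of a complete DVR O iff it carries a
discrete valuation v for which it is complete; then O = {x. x = 0 \<or> 0 \<le> v x}.\<close>

definition complete_dvf :: "('a::field \<Rightarrow> int) \<Rightarrow> bool" where
  "complete_dvf v \<longleftrightarrow> discrete_valuation v \<and>
     (\<forall>X. val_cauchy v X \<longrightarrow> (\<exists>L. val_converges v X L))"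

datatype player = Nora | Wanda

fun other :: "player \<Rightarrow> player" where
  "other Nora = Wanda" | "other Wanda = Nora"

text \<open>A position: partial assignment of coefficients a_0..a_d (None = not yet chosen).
A legal move picks an unchosen index i \<le> d and a value c, with c \<noteq> 0 if i = 0 or i = d.\<close>

definition legal_move :: "nat \<Rightarrow> (nat \<Rightarrow> 'a::field option) \<Rightarrow> nat \<Rightarrow> 'a \<Rightarrow> bool" where
  "legal_move d s i c \<longleftrightarrow> i \<le> d \<and> s i = None \<and> ((i = 0 \<or> i = d) \<longrightarrow> c \<noteq> 0)"

definition final_poly :: "nat \<Rightarrow> (nat \<Rightarrow> 'a::field option) \<Rightarrow> 'a poly" where
  "final_poly d s = (\<Sum>i\<le>d. monom (the (s i)) i)"

definition wanda_wins_final :: "nat \<Rightarrow> (nat \<Rightarrow> 'a::field option) \<Rightarrow> bool" where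
  "wanda_wins_final d s \<longleftrightarrow> (\<exists>x. poly (final_poly d s) x = 0)"

text \<open>forces P d n s m: with n moves remaining from position s and player m to move,
player P has a strategy guaranteeing a win (a finite game, so this is the existence of a
winning strategy).\<close>

fun forces :: "player \<Rightarrow> nat \<Rightarrow> nat \<Rightarrow> (nat \<Rightarrow> 'a::field option) \<Rightarrow> player \<Rightarrow> bool" where
  "forces P d 0 s m =
     (if P = Wanda then wanda_wins_final d s else \<not> wanda_wins_final d s)"
| "forces P d (Suc n) s m =
     (if m = P then (\<exists>i c. legal_move d s i c \<and> forces P d n (s(i := Some c)) (other m))
      else (\<forall>i c. legal_move d s i c \<longrightarrow> forces P d n (s(i := Some c)) (other m)))"

definition has_winning_strategy :: "'a::field itself \<Rightarrow> player \<Rightarrow> nat \<Rightarrow> player \<Rightarrow> bool" where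
  "has_winning_strategy _ P d first \<longleftrightarrow>
     forces P d (Suc d) (\<lambda>_. None :: 'a option) first"

definition last_mover :: "nat \<Rightarrow> player \<Rightarrow> player" where
  "last_mover d first = (if odd (Suc d) then first else other first)"

end

theory Submission
  imports Defs
begin

lemma poly2: "poly (final_poly 2 s) x = the (s 0) + the (s 1) * x + the (s 2) * x^2"
  by (simp add: final_poly_def numeral_2_eq_2 atMost_Suc poly_monom algebra_simps)

lemma forces3: "m = P \<Longrightarrow> forces P d (Suc (Suc (Suc 0))) s m =
  ((\<exists>i c. legal_move d s i c \<and>
     (\<forall>j e. legal_move d (s(i := Some c)) j e \<longrightarrow>
       (\<exists>k f. legal_move d (s(i := Some c, j := Some e)) k f \<and>
          forces P d 0 (s(i := Some c, j := Some e, k := Some f)) m))))"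
  by (cases m; cases P; simp)

lemma wanda_win: "forces Wanda (2::nat) (Suc (Suc (Suc 0))) (\<lambda>_. None :: 'a::field option) Wanda"
proof -
  have "\<forall>j e. legal_move 2 ((\<lambda>_. None :: 'a option)(1 := Some 0)) j e \<longrightarrow>
       (\<exists>k f. legal_move 2 ((\<lambda>_. None)(1 := Some 0, j := Some e)) k f \<and>
          wanda_wins_final 2 ((\<lambda>_. None)(1 := Some 0, j := Some e, k := Some f)))"
  proof (intro allI impI)
    fix j and e :: 'a
    assume l: "legal_move 2 ((\<lambda>_. None :: 'a option)(1 := Some 0)) j e"
    then have j: "j = 0 \<or> j = 2" and e: "e \<noteq> 0" by (auto simp: legal_move_def split: if_splits)
    show "\<exists>k f. legal_move 2 ((\<lambda>_. None)(1 := Some 0, j := Some e)) k f \<and>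
          wanda_wins_final 2 ((\<lambda>_. None)(1 := Some 0, j := Some e, k := Some f))"
    proof (cases "j = 0")
      case True
      show ?thesis
        apply (rule exI[of _ 2], rule exI[of _ "-e"])
        using True e by (simp add: legal_move_def wanda_wins_final_def poly2 exI[of _ 1])
    next
      case False
      with j have "j = 2" by simp
      show ?thesis
        apply (rule exI[of _ 0], rule exI[of _ "-e"])
        using \<open>j = 2\<close> e by (simp add: legal_move_def wanda_wins_final_def poly2 exI[of _ 1])
    qed
  qed
  then show ?thesis
    apply (subst forces3, simp)
    apply simp
    apply (rule exI[of _ 1], rule exI[of _ 0])
    by (simp add: legal_move_def)
qed

lemma val_basic:
  assumes "discrete_valuation v"
  shows "v (1::'a::field) = 0" "v (-1::'a) = 0"
    "\<And>x y. x \<noteq> 0 \<Longrightarrow> y \<noteq> 0 \<Longrightarrow> v (x * y) = v x + v y"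
proof -
  have m: "\<And>x y. x \<noteq> 0 \<Longrightarrow> y \<noteq> 0 \<Longrightarrow> v (x * y) = v x + v y"
    using assms by (simp add: discrete_valuation_def)
  show "\<And>x y. x \<noteq> 0 \<Longrightarrow> y \<noteq> 0 \<Longrightarrow> v (x * y) = v x + v y" by (rule m)
  have "v (1::'a) = v 1 + v 1" using m[of 1 1] by simp
  then show "v (1::'a) = 0" by simp
  have "v ((-1) * (-1::'a)) = v (-1) + v (-1)" using m[of "-1" "-1"] by simp
  then show "v (-1::'a) = 0" using \<open>v (1::'a) = 0\<close> by simp
qed

lemma nosq1:
  assumes "discrete_valuation v" "v p = 1" "p \<noteq> 0"
  shows "x * x \<noteq> - (p::'a::field)"
proof
  assume h: "x * x = - p"
  then have "x \<noteq> 0" using assms by auto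
  have "v (-p) = v (-1) + v p" using val_basic(3)[OF assms(1), of "-1" p] assms by simp
  then have "v (-p) = 1" using val_basic(2)[OF assms(1)] assms by simp
  moreover have "v (x*x) = v x + v x" using val_basic(3)[OF assms(1)] \<open>x \<noteq> 0\<close> by simp
  moreover have "v (x*x) = v (-p)" using h by simp
  ultimately show False by presburger
qed

lemma nora_win:
  fixes v :: "'a::field \<Rightarrow> int"
  assumes "discrete_valuation v"
  shows "forces Nora (2::nat) (Suc (Suc (Suc 0))) (\<lambda>_. None :: 'a option) Nora"
proof -
  obtain p :: 'a where p: "p \<noteq> 0" "v p = 1" using assms by (auto simp: discrete_valuation_def)
  have "\<forall>j e. legal_move 2 ((\<lambda>_. None :: 'a option)(1 := Some 0)) j e \<longrightarrow>
       (\<exists>k f. legal_move 2 ((\<lambda>_. None)(1 := Some 0, j := Some e)) k f \<and>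
          \<not> wanda_wins_final 2 ((\<lambda>_. None)(1 := Some 0, j := Some e, k := Some f)))"
  proof (intro allI impI)
    fix j and e :: 'a
    assume l: "legal_move 2 ((\<lambda>_. None :: 'a option)(1 := Some 0)) j e"
    then have j: "j = 0 \<or> j = 2" and e: "e \<noteq> 0" by (auto simp: legal_move_def split: if_splits)
    show "\<exists>k f. legal_move 2 ((\<lambda>_. None)(1 := Some 0, j := Some e)) k f \<and>
          \<not> wanda_wins_final 2 ((\<lambda>_. None)(1 := Some 0, j := Some e, k := Some f))"
    proof (cases "j = 0")
      case True
      have nr: "\<And>x. e + e * p * x^2 \<noteq> 0"
      proof
        fix x assume "e + e * p * x^2 = 0"
        then have "e * (1 + p * x^2) = 0" by (simp add: algebra_simps)
        then have "p * x^2 = -1" using e by (simp add: add_eq_0_iff)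
        then have "x \<noteq> 0" by auto
        have "(p * x) * (p * x) = - p" using \<open>p * x^2 = -1\<close>
          by (simp add: power2_eq_square algebra_simps)
        then show False using nosq1[OF assms p(2) p(1)] by blast
      qed
      show ?thesis
        apply (rule exI[of _ 2], rule exI[of _ "e * p"])
        using True e p nr by (simp add: legal_move_def wanda_wins_final_def poly2)
    next
      case False
      with j have "j = 2" by simp
      have nr: "\<And>x. e * p + e * x^2 \<noteq> 0"
      proof
        fix x assume "e * p + e * x^2 = 0"
        then have "e * (p + x^2) = 0" by (simp add: algebra_simps)
        then have "x * x = - p" using e by (simp add: add_eq_0_iff power2_eq_square)
        then show False using nosq1[OF assms p(2) p(1)] by blast
      qed
      show ?thesis
        apply (rule exI[of _ 0], rule exI[of _ "e * p"])
        using \<open>j = 2\<close> e p nr by (simp add: legal_move_def wanda_wins_final_def poly2)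
    qed
  qed
  then show ?thesis
    apply (subst forces3, simp)
    apply simp
    apply (rule exI[of _ 1], rule exI[of _ 0])
    by (simp add: legal_move_def)
qed

theorem lemma11:
  fixes v :: "'a::field \<Rightarrow> int" and first :: player
  assumes "complete_dvf v"
  shows "has_winning_strategy TYPE('a) (last_mover 2 first) 2 first"
proof -
  have dv: "discrete_valuation v" using assms by (simp add: complete_dvf_def)
  have "last_mover 2 first = first" by (simp add: last_mover_def)
  moreover have "(3::nat) = Suc (Suc (Suc 0))" by simp
  ultimately show ?thesis
    unfolding has_winning_strategy_def
    using wanda_win nora_win[OF dv] by (cases first) (simp_all add: numeral_3_eq_3)
qed

end
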